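(* Let $L,n$ be positive integers. As maps on $\mathcal M(L,n)$, the operators $e_i^\star$ ($1\le i\le L-1$) satisfy: (i) $(e_i^\star)^2=e_i^\star$; (ii) $e_i^\star e_j^\star=e_j^\star e_i^\star$ whenever $|i-j|\ge2$; (iii) $e_i^\star e_{i+1}^\star e_i^\star=e_{i+1}^\star e_i^\star e_{i+1}^\star$ for $1\le i\le L-2$.
   Context: $\mathcal M(L,n)$ is the set of tuples $B=(B_1,\dots,B_L)$ of subsets of $[n]$, drawn as an $L\times n$ grid with rows $1..L$ bottom to top, columns $1..n$ left to right, a ball in cell $(r,j)$ iff $j\in B_r$. The column word $\mathrm{cw}(B)$ scans columns left to right, each column top to bottom, recording row numbers of balls. For a word $w$ and $i\ge1$, $\mathrm{Par}_i(w)$ is obtained by reading $w$ left to right, writing "(" for each letter $i+1$ and ")" for each letter $i$, and iteratively matching a "(" with a ")" to its right whenever they are adjacent or only matched parentheses lie between them; letters whose parentheses remain unmatched are unmatched. The operator $e_i^\star$ moves every ball of row $i+1$ whose letter $i+1$ in $\mathrm{cw}(B)$ is unmatched in $\mathrm{Par}_i(\mathrm{cw}(B))$ down to the (necessarily empty) cell of row $i$ in the same column. Products of operators denote composition acting right to left. *)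

theory Defs
  imports Main
begin

text \<open>A ball configuration B = (B_1,...,B_L) is represented as a function
  B :: nat => nat set, where B r is the set of columns of row r.
  Rows outside 1..L are required to be empty.\<close>

definition Mset :: "nat \<Rightarrow> nat \<Rightarrow> (nat \<Rightarrow> nat set) set" where
  "Mset L n = {B. (\<forall>r. B r \<subseteq> {1..n}) \<and> (\<forall>r. r \<notin> {1..L} \<longrightarrow> B r = {})}"

text \<open>Column word, each letter tagged with its column (position data):
  columns left to right, each column top to bottom (rows decreasing).\<close>

definition cw :: "nat \<Rightarrow> nat \<Rightarrow> (nat \<Rightarrow> nat set) \<Rightarrow> (nat \<times> nat) list" where
  "cw L n B = concat (map (\<lambda>j. map (\<lambda>r. (r, j)) (filter (\<lambda>r. j \<in> B r) (rev [1..<L+1]))) [1..<n+1])"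

text \<open>Bracket matching Par_i: letter i+1 is "(", letter i is ")".\<close>

fun par_step :: "nat \<Rightarrow> nat list \<Rightarrow> nat \<times> nat \<Rightarrow> nat list" where
  "par_step i st (a, j) =
     (if a = i + 1 then j # st
      else if a = i then (case st of [] \<Rightarrow> [] | _ # st' \<Rightarrow> st')
      else st)"

definition unmatched_open :: "nat \<Rightarrow> (nat \<times> nat) list \<Rightarrow> nat set" where
  "unmatched_open i w = set (foldl (par_step i) [] w)"

definition estar :: "nat \<Rightarrow> nat \<Rightarrow> nat \<Rightarrow> (nat \<Rightarrow> nat set) \<Rightarrow> (nat \<Rightarrow> nat set)" where
  "estar L n i B =
     (let U = unmatched_open i (cw L n B)
      in B(i := B i \<union> U, i + 1 := B (i + 1) - U))"

end

theory Submission
  imports Defs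
begin

fun rc :: "nat \<Rightarrow> (nat\<times>nat) list \<Rightarrow> nat" where
"rc i [] = 0" |
"rc i ((a,j)#xs) = (if a = i then Suc (rc i xs) else if a = Suc i then rc i xs - 1 else rc i xs)"

fun Ew :: "nat \<Rightarrow> (nat\<times>nat) list \<Rightarrow> (nat\<times>nat) list" where
"Ew i [] = []" |
"Ew i ((a,j)#xs) = (if a = Suc i \<and> rc i xs = 0 then (i,j) else (a,j)) # Ew i xs"

fun rU :: "nat \<Rightarrow> (nat\<times>nat) list \<Rightarrow> nat set" where
"rU i [] = {}" |
"rU i ((a,j)#xs) = (if a = Suc i \<and> rc i xs = 0 then insert j (rU i xs) else rU i xs)"

lemma par_rU: "set (foldl (par_step i) st w) = rU i w \<union> set (drop (rc i w) st)"
proof (induction w arbitrary: st)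
  case Nil
  then show ?case by simp
next
  case (Cons x xs)
  obtain a j where x: "x = (a,j)" by force
  show ?case
  proof (cases "a = i")
    case True
    then show ?thesis using Cons.IH[of "tl st"] unfolding x
      by (cases st) (auto simp: drop_Suc)
  next
    case False
    then show ?thesis using Cons.IH[of "j # st"] Cons.IH[of st] unfolding x
      by (cases "rc i xs") auto
  qed
qed

lemma unmatched_rU: "unmatched_open i w = rU i w"
  unfolding unmatched_open_def using par_rU[of i "[]" w] by simp

lemma rU_sub: "j \<in> rU i w \<Longrightarrow> \<exists>p s. w = p @ (Suc i, j) # s \<and> rc i s = 0"
proof (induction w)
  case Nil
  then show ?case by simp
next
  case (Cons x xs)
  obtain a k where x: "x = (a,k)" by force
  show ?case
  proof (cases "a = Suc i \<and> rc i xs = 0 \<and> k = j")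
    case True
    then show ?thesis unfolding x by (intro exI[of _ "[]"] exI[of _ xs]) auto
  next
    case False
    then have "j \<in> rU i xs" using Cons.prems unfolding x by (auto split: if_splits)
    then obtain p s where "xs = p @ (Suc i, j) # s \<and> rc i s = 0" using Cons.IH by blast
    then show ?thesis unfolding x by (intro exI[of _ "(a,k) # p"] exI[of _ s]) auto
  qed
qed

lemma rU_set: "j \<in> rU i w \<Longrightarrow> (Suc i, j) \<in> set w"
  using rU_sub by fastforce

lemma Ew_map: "distinct w \<Longrightarrow>
  Ew i w = map (\<lambda>(a,j). if a = Suc i \<and> j \<in> rU i w then (i,j) else (a,j)) w"
proof (induction w)
  case Nil
  then show ?case by simp
next
  case (Cons x xs)
  obtain a j where x: "x = (a,j)" by force
  have nin: "(a,j) \<notin> set xs" using Cons.prems x by simp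
  have IH: "Ew i xs = map (\<lambda>(a,j). if a = Suc i \<and> j \<in> rU i xs then (i,j) else (a,j)) xs"
    using Cons by simp
  have tl: "map (\<lambda>(a,j). if a = Suc i \<and> j \<in> rU i xs then (i,j) else (a,j)) xs
      = map (\<lambda>(b,k). if b = Suc i \<and> k \<in> rU i ((a,j)#xs) then (i,k) else (b,k)) xs"
  proof (rule map_cong[OF refl])
    fix y assume y: "y \<in> set xs"
    obtain b k where yb: "y = (b,k)" by force
    show "(case y of (a,j) \<Rightarrow> if a = Suc i \<and> j \<in> rU i xs then (i,j) else (a,j))
        = (case y of (b,k) \<Rightarrow> if b = Suc i \<and> k \<in> rU i ((a,j)#xs) then (i,k) else (b,k))"
    proof -
      have "(k \<in> rU i ((a,j)#xs)) = (k \<in> rU i xs)" if "b = Suc i"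
      proof (cases "a = Suc i \<and> rc i xs = 0")
        case True
        then have "k \<noteq> j" using y nin that yb by auto
        then show ?thesis using True by simp
      next
        case False
        then show ?thesis by auto
      qed
      then show ?thesis unfolding yb by simp
    qed
  qed
  have hd: "(a = Suc i \<and> rc i xs = 0) = (a = Suc i \<and> j \<in> rU i ((a,j)#xs))"
  proof (cases "a = Suc i")
    case True
    then have "j \<notin> rU i xs" using rU_set nin by blast
    then show ?thesis using True by simp
  next
    case False
    then show ?thesis by simp
  qed
  have "Ew i ((a,j)#xs) = (if a = Suc i \<and> j \<in> rU i ((a,j)#xs) then (i,j) else (a,j))
     # map (\<lambda>(b,k). if b = Suc i \<and> k \<in> rU i ((a,j)#xs) then (i,k) else (b,k)) xs"
    by (simp only: Ew.simps hd IH tl)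
  then show ?case unfolding x by (simp only: list.map prod.case)
qed

lemma distinct_cols: "distinct js \<Longrightarrow> distinct rs \<Longrightarrow>
  distinct (concat (map (\<lambda>j. map (\<lambda>r. (r, j)) (filter (P j) rs)) js))"
proof (induction js)
  case Nil
  then show ?case by simp
next
  case (Cons j js)
  then show ?case by (auto simp: distinct_map inj_on_def)
qed

lemma distinct_cw: "distinct (cw L n B)"
  unfolding cw_def by (rule distinct_cols) auto

lemma in_concat_map: "x \<in> set (f j) \<Longrightarrow> j \<in> set js \<Longrightarrow> x \<in> set (concat (map f js))"
  by auto

lemma set_cw: "(r,j) \<in> set (cw L n B) \<longleftrightarrow> r \<in> {1..L} \<and> j \<in> {1..n} \<and> j \<in> B r"
proof
  assume "(r,j) \<in> set (cw L n B)"
  then show "r \<in> {1..L} \<and> j \<in> {1..n} \<and> j \<in> B r" unfolding cw_def by auto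
next
  assume a: "r \<in> {1..L} \<and> j \<in> {1..n} \<and> j \<in> B r"
  then have "r \<in> set (filter (\<lambda>r. j \<in> B r) (rev [1..<L+1]))" by (auto simp del: upt_Suc)
  then have "(r,j) \<in> set (map (\<lambda>r. (r, j)) (filter (\<lambda>r. j \<in> B r) (rev [1..<L+1])))" by auto
  moreover have "j \<in> set [1..<n+1]" using a by (auto simp del: upt_Suc)
  ultimately show "(r,j) \<in> set (cw L n B)" unfolding cw_def
    by (rule in_concat_map)
qed

lemma rows_split:
  assumes "1 \<le> i" "Suc i \<le> L"
  shows "rev [1..<L+1] = rev [i+2..<L+1] @ [Suc i, i] @ rev [1..<i]"
proof -
  have "[1..<L+1] = [1..<i] @ [i..<L+1]"
    using upt_add_eq_append[of 1 i "L+1-i"] assms by simp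
  also have "[i..<L+1] = i # Suc i # [i+2..<L+1]"
    using assms by (simp add: upt_conv_Cons)
  finally show ?thesis by simp
qed

lemma distinct_same_suffix:
  "distinct (p @ x # s) \<Longrightarrow> p @ x # s = p' @ x # s' \<Longrightarrow> s = s'"
proof (induction p arbitrary: p')
  case Nil
  then show ?case by (cases p') auto
next
  case (Cons y p)
  show ?case
  proof (cases p')
    case Nil
    then show ?thesis using Cons.prems by auto
  next
    case (Cons y' q)
    then have "p @ x # s = q @ x # s'" using Cons.prems(2) by simp
    moreover have "distinct (p @ x # s)" using Cons.prems(1) by simp
    ultimately show ?thesis using Cons.IH by blast
  qed
qed

lemma col_pair:
  assumes "1 \<le> i" "Suc i \<le> L" "j \<in> {1..n}" "j \<in> B i" "j \<in> B (Suc i)"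
  shows "\<exists>p s. cw L n B = p @ (Suc i, j) # (i, j) # s"
proof -
  let ?col = "\<lambda>j. map (\<lambda>r. (r, j)) (filter (\<lambda>r. j \<in> B r) (rev [1..<L+1]))"
  have "j \<in> set [1..<n+1]" using assms by auto
  then obtain js1 js2 where js: "[1..<n+1] = js1 @ j # js2" by (meson split_list)
  have colj: "?col j = map (\<lambda>r. (r, j)) (filter (\<lambda>r. j \<in> B r) (rev [i+2..<L+1]))
        @ (Suc i, j) # (i, j) # map (\<lambda>r. (r, j)) (filter (\<lambda>r. j \<in> B r) (rev [1..<i]))"
    unfolding rows_split[OF assms(1,2)] using assms by simp
  have cweq: "cw L n B = concat (map ?col js1) @ ?col j @ concat (map ?col js2)"
    unfolding cw_def js by (simp only: map_append list.map(2) concat_append concat.simps(2) append_assoc)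
  show ?thesis unfolding cweq colj
    by (intro exI[of _ "concat (map ?col js1) @ map (\<lambda>r. (r, j)) (filter (\<lambda>r. j \<in> B r) (rev [i+2..<L+1]))"]
        exI[of _ "map (\<lambda>r. (r, j)) (filter (\<lambda>r. j \<in> B r) (rev [1..<i])) @ concat (map ?col js2)"])
      (simp only: append_assoc append_Cons)
qed

lemma U_notin:
  assumes "1 \<le> i" "Suc i \<le> L" "j \<in> rU i (cw L n B)"
  shows "j \<notin> B i" "j \<in> B (Suc i)" "j \<in> {1..n}"
proof -
  have s: "(Suc i, j) \<in> set (cw L n B)" using rU_set assms by blast
  then show b: "j \<in> B (Suc i)" "j \<in> {1..n}" using set_cw by auto
  show "j \<notin> B i"
  proof
    assume "j \<in> B i"
    then obtain p s where ps: "cw L n B = p @ (Suc i, j) # (i, j) # s"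
      using col_pair assms b by blast
    obtain p' s' where ps': "cw L n B = p' @ (Suc i, j) # s'" "rc i s' = 0"
      using rU_sub assms by blast
    have eq: "p @ (Suc i, j) # (i,j) # s = p' @ (Suc i, j) # s'" unfolding ps[symmetric] by (rule ps'(1))
    have "distinct (p @ (Suc i, j) # (i,j) # s)" using distinct_cw[of L n B] unfolding ps .
    then have "(i,j) # s = s'" by (rule distinct_same_suffix[OF _ eq])
    then show False using ps' by auto
  qed
qed

lemma estar_Mset:
  assumes "B \<in> Mset L n" "1 \<le> i" "Suc i \<le> L"
  shows "estar L n i B \<in> Mset L n"
proof -
  define U where "U = rU i (cw L n B)"
  have U: "U \<subseteq> {1..n}" using U_notin[OF assms(2,3)] U_def by blast
  have E: "estar L n i B = B(i := B i \<union> U, Suc i := B (Suc i) - U)"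
    unfolding estar_def U_def unmatched_rU Let_def by simp
  have B1: "\<forall>r. B r \<subseteq> {1..n}" and B2: "\<forall>r. r \<notin> {1..L} \<longrightarrow> B r = {}"
    using assms(1) unfolding Mset_def by blast+
  have "\<forall>r. (B(i := B i \<union> U, Suc i := B (Suc i) - U)) r \<subseteq> {1..n}"
    using B1 U by auto
  moreover have "\<forall>r. r \<notin> {1..L} \<longrightarrow> (B(i := B i \<union> U, Suc i := B (Suc i) - U)) r = {}"
    using B2 assms(2,3) by auto
  ultimately show ?thesis unfolding E Mset_def by blast
qed

lemma estar_cw:
  assumes "B \<in> Mset L n" "1 \<le> i" "Suc i \<le> L"
  shows "cw L n (estar L n i B) = Ew i (cw L n B)"
proof -
  define U where "U = rU i (cw L n B)"
  define g where "g = (\<lambda>(a::nat,j::nat). if a = Suc i \<and> j \<in> U then (i,j) else (a,j))"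
  define B' where "B' = B(i := B i \<union> U, Suc i := B (Suc i) - U)"
  have E: "estar L n i B = B'" unfolding estar_def B'_def U_def unmatched_rU Let_def by simp
  have Ew: "Ew i (cw L n B) = map g (cw L n B)"
    unfolding g_def U_def using Ew_map distinct_cw by blast
  have col: "map (\<lambda>r. (r, j)) (filter (\<lambda>r. j \<in> B' r) (rev [1..<L+1]))
      = map g (map (\<lambda>r. (r, j)) (filter (\<lambda>r. j \<in> B r) (rev [1..<L+1])))" for j
  proof (cases "j \<in> U")
    case False
    have "filter (\<lambda>r. j \<in> B' r) (rev [1..<L+1]) = filter (\<lambda>r. j \<in> B r) (rev [1..<L+1])"
      using False unfolding B'_def by (intro filter_cong) auto
    then show ?thesis using False unfolding g_def by (auto intro: map_cong)
  next
    case True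
    have u: "j \<notin> B i" "j \<in> B (Suc i)" using U_notin[OF assms(2,3)] True U_def by auto
    have gen: "map (\<lambda>r. (r, j)) (filter (\<lambda>r. j \<in> B' r) rs)
      = map g (map (\<lambda>r. (r, j)) (filter (\<lambda>r. j \<in> B r) rs))"
      if "i \<notin> set rs" "Suc i \<notin> set rs" for rs
    proof -
      have "filter (\<lambda>r. j \<in> B' r) rs = filter (\<lambda>r. j \<in> B r) rs"
        using that unfolding B'_def by (intro filter_cong) auto
      then show ?thesis using that unfolding g_def by (auto intro: map_cong)
    qed
    have g1: "i \<notin> set (rev [i+2..<L+1])" "Suc i \<notin> set (rev [i+2..<L+1])"
      "i \<notin> set (rev [1..<i])" "Suc i \<notin> set (rev [1..<i])" by auto
    have mid: "map (\<lambda>r. (r, j)) (filter (\<lambda>r. j \<in> B' r) [Suc i, i])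
      = map g (map (\<lambda>r. (r, j)) (filter (\<lambda>r. j \<in> B r) [Suc i, i]))"
      using u True unfolding B'_def g_def by simp
    show ?thesis unfolding rows_split[OF assms(2,3)] filter_append map_append
      gen[OF g1(1,2)] gen[OF g1(3,4)] mid by (rule refl)
  qed
  show ?thesis unfolding E Ew unfolding cw_def col map_concat map_map comp_def by (rule refl)
qed

lemma cw_inj:
  assumes "B \<in> Mset L n" "B' \<in> Mset L n" "cw L n B = cw L n B'"
  shows "B = B'"
proof (rule ext)
  fix r
  show "B r = B' r"
  proof (cases "r \<in> {1..L}")
    case True
    have s: "B r \<subseteq> {1..n}" "B' r \<subseteq> {1..n}" using assms(1,2) unfolding Mset_def by blast+
    have "B r = {j. (r,j) \<in> set (cw L n B)}" using s(1) True set_cw[of r _ L n B] by blast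
    moreover have "B' r = {j. (r,j) \<in> set (cw L n B')}" using s(2) True set_cw[of r _ L n B'] by blast
    ultimately show ?thesis using assms(3) by simp
  next
    case False
    then show ?thesis using assms(1,2) unfolding Mset_def by blast
  qed
qed

lemma braid_w:
  "Ew i (Ew (Suc i) (Ew i w)) = Ew (Suc i) (Ew i (Ew (Suc i) w))
   \<and> rc (Suc i) w = rc (Suc i) (Ew i w) + rc i (Ew (Suc i) (Ew i w)) - min (rc i w) (rc i (Ew (Suc i) (Ew i w)))
   \<and> rc i (Ew (Suc i) w) = min (rc i w) (rc i (Ew (Suc i) (Ew i w)))
   \<and> rc (Suc i) (Ew i (Ew (Suc i) w)) = rc i w + rc (Suc i) (Ew i w) - min (rc i w) (rc i (Ew (Suc i) (Ew i w)))"
proof (induction w)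
  case Nil
  then show ?case by simp
next
  case (Cons x xs)
  obtain a j where x: "x = (a,j)" by force
  show ?case using Cons.IH unfolding x
    by (cases "a = i"; cases "a = Suc i"; cases "a = Suc (Suc i)"; simp add: min_def split: if_splits; arith)
qed

lemma idem_w: "Ew i (Ew i w) = Ew i w \<and> rc i w \<le> rc i (Ew i w)"
proof (induction w)
  case Nil
  then show ?case by simp
next
  case (Cons x xs)
  obtain a j where x: "x = (a,j)" by force
  show ?case using Cons.IH unfolding x
    by (cases "a = i"; cases "a = Suc i"; auto)
qed

lemma comm_w: assumes "Suc (Suc i) \<le> k" shows "Ew i (Ew k w) = Ew k (Ew i w) \<and> rc i (Ew k w) = rc i w \<and> rc k (Ew i w) = rc k w"
proof (induction w)
  case Nil
  then show ?case by simp
next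
  case (Cons x xs)
  obtain a j where x: "x = (a,j)" by force
  show ?case using Cons.IH assms unfolding x
    by (cases "a = i"; cases "a = Suc i"; cases "a = k"; cases "a = Suc k"; auto)
qed

lemma cw_step:
  assumes "B \<in> Mset L n" "1 \<le> i" "Suc i \<le> L"
  shows "estar L n i B \<in> Mset L n \<and> cw L n (estar L n i B) = Ew i (cw L n B)"
  using estar_Mset[OF assms] estar_cw[OF assms] by blast

theorem theorem4p6:
  fixes L n :: nat
  assumes "1 \<le> L" and "1 \<le> n"
  shows "(\<forall>i\<in>{1..L-1}. \<forall>B\<in>Mset L n.
            estar L n i (estar L n i B) = estar L n i B)
       \<and> (\<forall>i\<in>{1..L-1}. \<forall>j\<in>{1..L-1}. (i + 2 \<le> j \<or> j + 2 \<le> i) \<longrightarrow>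
            (\<forall>B\<in>Mset L n. estar L n i (estar L n j B) = estar L n j (estar L n i B)))
       \<and> (\<forall>i\<in>{1..L-2}. \<forall>B\<in>Mset L n.
            estar L n i (estar L n (i+1) (estar L n i B))
          = estar L n (i+1) (estar L n i (estar L n (i+1) B)))"
proof (intro conjI ballI impI)
  fix i B assume i: "i \<in> {1..L-1}" and B: "B \<in> Mset L n"
  have i1: "1 \<le> i" "Suc i \<le> L" using i by auto
  note s1 = cw_step[OF B i1]
  note s2 = cw_step[OF conjunct1[OF s1] i1]
  show "estar L n i (estar L n i B) = estar L n i B"
    by (rule cw_inj[OF conjunct1[OF s2] conjunct1[OF s1]])
       (simp only: s1 s2 conjunct1[OF idem_w])
next
  fix i j B assume i: "i \<in> {1..L-1}" and j: "j \<in> {1..L-1}"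
    and ij: "i + 2 \<le> j \<or> j + 2 \<le> i" and B: "B \<in> Mset L n"
  have i1: "1 \<le> i" "Suc i \<le> L" using i by auto
  have j1: "1 \<le> j" "Suc j \<le> L" using j by auto
  note a1 = cw_step[OF B j1]
  note a2 = cw_step[OF conjunct1[OF a1] i1]
  note b1 = cw_step[OF B i1]
  note b2 = cw_step[OF conjunct1[OF b1] j1]
  have c: "Ew i (Ew j w) = Ew j (Ew i w)" for w
    using ij conjunct1[OF comm_w[of i j w]] conjunct1[OF comm_w[of j i w]] by auto
  show "estar L n i (estar L n j B) = estar L n j (estar L n i B)"
    by (rule cw_inj[OF conjunct1[OF a2] conjunct1[OF b2]])
       (simp only: a1 a2 b1 b2 c)
next
  fix i B assume i: "i \<in> {1..L-2}" and B: "B \<in> Mset L n"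
  have i1: "1 \<le> i" "Suc i \<le> L" using i by auto
  have i2: "1 \<le> i+1" "Suc (i+1) \<le> L" using i by auto
  note a1 = cw_step[OF B i1]
  note a2 = cw_step[OF conjunct1[OF a1] i2]
  note a3 = cw_step[OF conjunct1[OF a2] i1]
  note b1 = cw_step[OF B i2]
  note b2 = cw_step[OF conjunct1[OF b1] i1]
  note b3 = cw_step[OF conjunct1[OF b2] i2]
  have c: "Ew i (Ew (i+1) (Ew i w)) = Ew (i+1) (Ew i (Ew (i+1) w))" for w
    using conjunct1[OF braid_w[of i w]] by simp
  show "estar L n i (estar L n (i+1) (estar L n i B))
          = estar L n (i+1) (estar L n i (estar L n (i+1) B))"
    by (rule cw_inj[OF conjunct1[OF a3] conjunct1[OF b3]])
       (simp only: a1 a2 a3 b1 b2 b3 c)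
qed

end
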